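(* Let $1\le s\le d$ and let $J\subseteq J_{\mathbb C}$. Then $J\in\mathcal J(s,\mathbb C)$ if and only if there exist $V\in\mathcal G(s,d)$ and a block column echelon basis $W$ of $V$ (with data $r$, $b_1,\dots,b_r$, $k_1<\dots<k_r$) such that $$\{k_j+1:\ j\in\{1,\dots,r\},\ b_j=1,\ d_{k_j+1}=2\}=J.$$
   Context: Fix $d_1,\dots,d_k\in\{1,2\}$ with $d=d_1+\dots+d_k$ and let $J_{\mathbb C}=\{j\in\{1,\dots,k\}:d_j=2\}$. Define $\mathcal J(s,\mathbb C)=\{J\subseteq J_{\mathbb C}:\ |J|\le\min(s,d-s),\ \text{and } s-|J| \text{ is even if } |J_{\mathbb C}|=k\}$. Block column echelon basis: the rows of $W\in\mathbb R^{d\times s}$ are partitioned into consecutive blocks of sizes $d_1,\dots,d_k$. A block column echelon basis of $V\in\mathcal G(s,d)$ is a $W\in\mathbb R^{d\times s}$ with $\mathrm{range}(W)=V$ whose columns are partitioned into consecutive groups of sizes $b_1,\dots,b_r\in\{1,2\}$, $\sum_jb_j=s$, such that, writing $W_{ij}\in\mathbb R^{d_i\times b_j}$ for the resulting blocks, there are indices $0\le k_1<\dots<k_r<k$ with $W_{ij}=0$ for $i\le k_j$ and $\mathrm{rank}(W_{k_j+1,j})=b_j$ (so $b_j=1$ whenever $d_{k_j+1}=1$). $\mathcal G(s,d)$ is the Grassmannian of $s$-dimensional subspaces of $\mathbb R^d$. *)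

theory Defs
  imports "HOL-Analysis.Analysis" "Jordan_Normal_Form.DL_Rank"
begin

(* Conventions: the block sizes d_1,...,d_k are given by dd :: nat => nat on {1..k}
   (1-based, as in the paper).  Column groups b_1,...,b_r and indices k_1<...<k_r are
   given by b, kk :: nat => nat on {1..r}.  Matrices are Jordan_Normal_Form matrices,
   with 0-based row/column indices. *)

definition total_dim :: "nat \<Rightarrow> (nat \<Rightarrow> nat) \<Rightarrow> nat" where
  "total_dim k dd = (\<Sum>l=1..k. dd l)"

definition JC :: "nat \<Rightarrow> (nat \<Rightarrow> nat) \<Rightarrow> nat set" where
  "JC k dd = {j \<in> {1..k}. dd j = 2}"

definition calJ :: "nat \<Rightarrow> (nat \<Rightarrow> nat) \<Rightarrow> nat \<Rightarrow> nat set set" where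
  "calJ k dd s = {J. J \<subseteq> JC k dd \<and> card J \<le> min s (total_dim k dd - s)
                     \<and> (card (JC k dd) = k \<longrightarrow> even (s - card J))}"

definition grassmannian :: "nat \<Rightarrow> nat \<Rightarrow> real vec set set" where
  "grassmannian s d = {V. subspace (class_ring :: real ring) V (module_vec TYPE(real) d)
      \<and> vectorspace.dim (class_ring :: real ring) ((module_vec TYPE(real) d)\<lparr>carrier := V\<rparr>) = s}"

definition blk_off :: "(nat \<Rightarrow> nat) \<Rightarrow> nat \<Rightarrow> nat" where
  "blk_off c i = (\<Sum>l=1..<i. c l)"

definition blk :: "real mat \<Rightarrow> (nat \<Rightarrow> nat) \<Rightarrow> (nat \<Rightarrow> nat) \<Rightarrow> nat \<Rightarrow> nat \<Rightarrow> real mat" where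
  "blk W dd b i j = mat (dd i) (b j) (\<lambda>(p,q). W $$ (blk_off dd i + p, blk_off b j + q))"

definition is_bce_basis :: "nat \<Rightarrow> (nat \<Rightarrow> nat) \<Rightarrow> nat \<Rightarrow> real vec set \<Rightarrow> real mat
     \<Rightarrow> nat \<Rightarrow> (nat \<Rightarrow> nat) \<Rightarrow> (nat \<Rightarrow> nat) \<Rightarrow> bool" where
  "is_bce_basis k dd s V W r b kk \<longleftrightarrow>
     W \<in> carrier_mat (total_dim k dd) s
   \<and> (vec_space.col_space (total_dim k dd) W :: real vec set) = V
   \<and> (\<forall>j\<in>{1..r}. b j \<in> {1,2})
   \<and> (\<Sum>j=1..r. b j) = s
   \<and> (\<forall>j\<in>{1..r}. \<forall>j'\<in>{1..r}. j < j' \<longrightarrow> kk j < kk j')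
   \<and> (\<forall>j\<in>{1..r}. kk j < k)
   \<and> (\<forall>j\<in>{1..r}. \<forall>i\<in>{1..kk j}. blk W dd b i j = 0\<^sub>m (dd i) (b j))
   \<and> (\<forall>j\<in>{1..r}. vec_space.rank (dd (kk j + 1)) (blk W dd b (kk j + 1) j) = b j)"

end

theory Submission
  imports Defs
begin



lemma rank_left_inv:
  fixes A B :: "real mat"
  assumes A: "A \<in> carrier_mat n m" and B: "B \<in> carrier_mat m n" and BA: "B * A = 1\<^sub>m m"
  shows "vec_space.rank n A = m"
proof -
  interpret vs: vec_space "TYPE(real)" n .
  have colA: "\<And>i. i < m \<Longrightarrow> B *\<^sub>v col A i = unit_vec m i"
  proof -
    fix i assume i: "i < m"
    have "B *\<^sub>v col A i = col (B * A) i" using A B i by (metis col_mult2)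
    also have "\<dots> = unit_vec m i" using BA i by simp
    finally show "B *\<^sub>v col A i = unit_vec m i" .
  qed
  have dist: "distinct (cols A)"
  proof -
    have "\<And>i j. i < m \<Longrightarrow> j < m \<Longrightarrow> col A i = col A j \<Longrightarrow> i = j"
    proof -
      fix i j assume i: "i < m" and j: "j < m" and e: "col A i = col A j"
      have "unit_vec m i = (unit_vec m j :: real vec)" using colA[OF i] colA[OF j] e by simp
      then have "unit_vec m i $ i = (unit_vec m j :: real vec) $ i" by simp
      then show "i = j" using i j by (auto split: if_splits)
    qed
    then show ?thesis using A unfolding distinct_conv_nth by (simp add: cols_def) blast
  qed
  have li: "vs.lin_indpt (set (cols A))"
  proof (rule ccontr)
    assume "\<not> vs.lin_indpt (set (cols A))"
    then obtain v where v: "v \<in> carrier_vec m" "v \<noteq> 0\<^sub>v m" "A *\<^sub>v v = 0\<^sub>v n"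
      using vs.lin_depE[OF A _ dist] by blast
    have "v = (B * A) *\<^sub>v v" using BA v(1) by simp
    also have "\<dots> = B *\<^sub>v (A *\<^sub>v v)" using A B v(1) by (simp add: assoc_mult_mat_vec)
    also have "\<dots> = 0\<^sub>v m" using v(3) B by (intro eq_vecI) (auto simp: scalar_prod_def)
    finally show False using v(2) by simp
  qed
  show ?thesis using vs.lin_indpt_full_rank[OF A dist li] .
qed

lemma rank_le_nr:
  fixes A :: "real mat"
  assumes A: "A \<in> carrier_mat n m"
  shows "vec_space.rank n A \<le> n"
proof -
  interpret vs: vec_space "TYPE(real)" n .
  have sub: "set (cols A) \<subseteq> carrier_vec n" using A cols_dim by blast
  have "vs.rank A = vectorspace.dim class_ring (vs.vs (vs.span (set (cols A))))"
    unfolding vs.rank_def by simp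
  also have "\<dots> \<le> vs.dim"
  proof (rule vs.subspace_dim[OF vs.span_is_subspace[OF sub] vs.fin_dim])
    show "vectorspace.fin_dim class_ring (vs.vs (vs.span (set (cols A))))"
      using vs.fin_dim_span[of "set (cols A)"] sub by simp
  qed
  also have "\<dots> = n" by (rule vs.dim_is_n)
  finally show ?thesis .
qed

lemma rank_unit_cols:
  fixes g :: "nat \<Rightarrow> nat"
  assumes inj: "inj_on g {..<m}" and lt: "\<And>c. c < m \<Longrightarrow> g c < n"
  shows "vec_space.rank n (mat n m (\<lambda>(x,c). if x = g c then 1 else 0) :: real mat) = m"
proof -
  define A :: "real mat" where "A = mat n m (\<lambda>(x,c). if x = g c then 1 else 0)"
  have A: "A \<in> carrier_mat n m" unfolding A_def by simp
  have "A\<^sup>T * A = 1\<^sub>m m"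
  proof (rule eq_matI)
    fix i j assume i: "i < dim_row (1\<^sub>m m)" and j: "j < dim_col (1\<^sub>m m)"
    then have i: "i < m" and j: "j < m" by auto
    have "(A\<^sup>T * A) $$ (i,j) = (\<Sum>x<n. (if x = g i then 1 else 0) * (if x = g j then 1 else 0 :: real))"
      using i j unfolding A_def by (simp add: scalar_prod_def atLeast0LessThan)
    also have "\<dots> = (\<Sum>x<n. if x = g i then (if g i = g j then 1 else 0) else 0)"
      by (rule sum.cong) auto
    also have "\<dots> = (if g i = g j then 1 else 0)" using lt[OF i] by simp
    also have "\<dots> = 1\<^sub>m m $$ (i,j)" using i j inj by (auto simp: inj_on_def)
    finally show "(A\<^sup>T * A) $$ (i,j) = 1\<^sub>m m $$ (i,j)" .
  qed (auto simp: A_def)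
  then have "vec_space.rank n A = m" using rank_left_inv[OF A, of "A\<^sup>T"] A by auto
  then show ?thesis unfolding A_def .
qed



lemma backward:
  assumes dd: "\<forall>i\<in>{1..k}. dd i \<in> {1,2}"
    and bce: "is_bce_basis k dd s V W r b kk"
  shows "{kk j + 1 | j. j \<in> {1..r} \<and> b j = 1 \<and> dd (kk j + 1) = 2} \<in> calJ k dd s"
proof -
  define S1 where "S1 = {j \<in> {1..r}. b j = 1 \<and> dd (kk j + 1) = 2}"
  define J where "J = {kk j + 1 | j. j \<in> {1..r} \<and> b j = 1 \<and> dd (kk j + 1) = 2}"
  have Wc: "W \<in> carrier_mat (total_dim k dd) s"
    and bv: "\<forall>j\<in>{1..r}. b j \<in> {1,2}"
    and bs: "(\<Sum>j=1..r. b j) = s"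
    and kmono: "\<forall>j\<in>{1..r}. \<forall>j'\<in>{1..r}. j < j' \<longrightarrow> kk j < kk j'"
    and klt: "\<forall>j\<in>{1..r}. kk j < k"
    and rk: "\<forall>j\<in>{1..r}. vec_space.rank (dd (kk j + 1)) (blk W dd b (kk j + 1) j) = b j"
    using bce unfolding is_bce_basis_def by blast+
  have inj: "inj_on (\<lambda>j. kk j + 1) {1..r}"
  proof (rule inj_onI)
    fix x y assume x: "x \<in> {1..r}" and y: "y \<in> {1..r}" and e: "kk x + 1 = kk y + 1"
    show "x = y"
    proof (rule ccontr)
      assume "x \<noteq> y"
      then have "x < y \<or> y < x" by arith
      then show False using kmono x y e by force
    qed
  qed
  have JS: "J = (\<lambda>j. kk j + 1) ` S1" unfolding J_def S1_def by auto
  have cardJ: "card J = card S1" unfolding JS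
    by (rule card_image) (rule inj_on_subset[OF inj], auto simp: S1_def)
  have S1sub: "S1 \<subseteq> {1..r}" unfolding S1_def by auto
  have JsubJC: "J \<subseteq> JC k dd" unfolding J_def JC_def using klt by (auto simp: Suc_le_eq)
  have bge: "\<And>j. j \<in> {1..r} \<Longrightarrow> b j + (if j \<in> S1 then 1 else 0) \<le> dd (kk j + 1)"
  proof -
    fix j assume j: "j \<in> {1..r}"
    have "blk W dd b (kk j + 1) j \<in> carrier_mat (dd (kk j + 1)) (b j)" unfolding blk_def by simp
    from rank_le_nr[OF this] rk j have "b j \<le> dd (kk j + 1)" by simp
    then show "b j + (if j \<in> S1 then 1 else 0) \<le> dd (kk j + 1)"
      unfolding S1_def by auto
  qed
  have "(\<Sum>j=1..r. b j + (if j \<in> S1 then 1 else 0)) = s + card S1"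
    using bs S1sub by (simp add: sum.distrib sum.If_cases Int_absorb1)
  moreover have "(\<Sum>j=1..r. b j + (if j \<in> S1 then 1 else 0)) \<le> (\<Sum>j=1..r. dd (kk j + 1))"
    by (rule sum_mono) (rule bge)
  moreover have "(\<Sum>j=1..r. dd (kk j + 1)) = (\<Sum>i\<in>(\<lambda>j. kk j + 1) ` {1..r}. dd i)"
    by (rule sum.reindex[OF inj, symmetric, unfolded comp_def])
  moreover have "(\<Sum>i\<in>(\<lambda>j. kk j + 1) ` {1..r}. dd i) \<le> (\<Sum>i=1..k. dd i)"
    by (rule sum_mono2) (use klt in auto)
  ultimately have le1: "s + card S1 \<le> total_dim k dd" unfolding total_dim_def by linarith
  have le2: "card S1 \<le> s"
  proof -
    have "card S1 \<le> card {1..r}" by (rule card_mono) (use S1sub in auto)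
    also have "\<dots> = (\<Sum>j=1..r. (1::nat))" by simp
    also have "\<dots> \<le> s" unfolding bs[symmetric] by (rule sum_mono) (use bv in fastforce)
    finally show ?thesis .
  qed
  have par: "card (JC k dd) = k \<longrightarrow> even (s - card S1)"
  proof
    assume c: "card (JC k dd) = k"
    have sub: "JC k dd \<subseteq> {1..k}" unfolding JC_def by blast
    have "card (JC k dd) = card {1..k}" using c by simp
    then have "JC k dd = {1..k}"
      by (rule card_subset_eq[OF finite_atLeastAtMost sub])
    then have dd2: "\<And>i. i \<in> {1..k} \<Longrightarrow> dd i = 2"
    proof -
      fix i assume e: "JC k dd = {1..k}" and i: "i \<in> {1..k}"
      then have "i \<in> JC k dd" by simp
      then show "dd i = 2" unfolding JC_def by simp
    qed
    have "\<And>j. j \<in> {1..r} \<Longrightarrow> b j = (if j \<in> S1 then 1 else 2)"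
    proof -
      fix j assume j: "j \<in> {1..r}"
      have "kk j + 1 \<in> {1..k}" using klt j by (simp add: Suc_le_eq)
      then have "dd (kk j + 1) = 2" by (rule dd2)
      moreover have "b j \<in> {1,2}" using bv j by blast
      ultimately show "b j = (if j \<in> S1 then 1 else 2)" using j unfolding S1_def by auto
    qed
    then have "s = (\<Sum>j=1..r. (if j \<in> S1 then 1 else 2::nat))" using bs by simp
    also have "\<dots> = card S1 + 2 * card ({1..r} - S1)"
      using S1sub by (simp add: sum.If_cases Int_absorb1 Diff_eq)
    finally show "even (s - card S1)" by simp
  qed
  show ?thesis
    using JsubJC le1 le2 par cardJ unfolding calJ_def J_def[symmetric] by auto
qed



lemma blk_off_Suc: "1 \<le> j \<Longrightarrow> blk_off c (Suc j) = blk_off c j + c j"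
  unfolding blk_off_def by (simp add: sum.atLeastLessThan_Suc)

lemma blk_off_mono: "i \<le> j \<Longrightarrow> blk_off c i \<le> blk_off c j"
  unfolding blk_off_def by (rule sum_mono2) auto

lemma blk_off_lt: "1 \<le> i \<Longrightarrow> i < j \<Longrightarrow> x < c i \<Longrightarrow> blk_off c i + x < blk_off c j"
  using blk_off_Suc[of i c] blk_off_mono[of "Suc i" j c] by simp

lemma blk_off_1: "blk_off c 1 = 0"
  unfolding blk_off_def by simp

lemma grp_eq:
  assumes "1 \<le> j" "q < c j"
  shows "(LEAST j'. blk_off c j + q < blk_off c (Suc j')) = j"
proof (rule Least_equality)
  show "blk_off c j + q < blk_off c (Suc j)" using assms blk_off_Suc[of j c] by simp
next
  fix y assume y: "blk_off c j + q < blk_off c (Suc y)"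
  show "j \<le> y"
  proof (rule ccontr)
    assume "\<not> j \<le> y"
    then have "blk_off c (Suc y) \<le> blk_off c j" by (intro blk_off_mono) simp
    then show False using y by simp
  qed
qed

lemma grp_cover:
  assumes "x < blk_off c (Suc r)"
  shows "\<exists>j q. 1 \<le> j \<and> j \<le> r \<and> q < c j \<and> x = blk_off c j + q"
proof -
  define j where "j = (LEAST j. x < blk_off c (Suc j))"
  have j1: "x < blk_off c (Suc j)" unfolding j_def by (rule LeastI[of _ r]) (rule assms)
  have jr: "j \<le> r" unfolding j_def by (rule Least_le) (rule assms)
  have j0: "1 \<le> j"
  proof (rule ccontr)
    assume "\<not> 1 \<le> j" then have "j = 0" by simp
    then show False using j1 blk_off_1[of c] by simp
  qed
  have "\<not> x < blk_off c (Suc (j - 1))"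
  proof
    assume "x < blk_off c (Suc (j - 1))"
    then have "j \<le> j - 1" unfolding j_def by (rule Least_le)
    then show False using j0 by simp
  qed
  then have le: "blk_off c j \<le> x" using j0 by simp
  show ?thesis
    by (rule exI[of _ j], rule exI[of _ "x - blk_off c j"])
       (use j0 jr le j1 blk_off_Suc[of j c] in auto)
qed



lemma construct:
  fixes P :: "nat set" and bb :: "nat \<Rightarrow> nat"
  assumes Psub: "P \<subseteq> {1..k}"
    and bbv: "\<And>i. i \<in> P \<Longrightarrow> bb i \<in> {1,2}"
    and bbd: "\<And>i. i \<in> P \<Longrightarrow> bb i \<le> dd i"
    and ssum: "s = (\<Sum>i\<in>P. bb i)"
  shows "\<exists>V W r b kk. V \<in> grassmannian s (total_dim k dd) \<and> is_bce_basis k dd s V W r b kk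
       \<and> {kk j + 1 | j. j \<in> {1..r} \<and> b j = 1 \<and> dd (kk j + 1) = 2} = {i\<in>P. bb i = 1 \<and> dd i = 2}"
proof -
  have finP: "finite P" using Psub finite_subset by blast
  define L where "L = sorted_list_of_set P"
  define r where "r = card P"
  define p where "p j = L ! (j - 1)" for j
  define kk where "kk j = p j - 1" for j
  define b where "b j = bb (p j)" for j
  define d where "d = total_dim k dd"
  have lenL: "length L = r" unfolding L_def r_def by simp
  have setL: "set L = P" unfolding L_def using finP by simp
  have sortL: "sorted_wrt (<) L" unfolding L_def by (rule strict_sorted_list_of_set)
  have pP: "\<And>j. j \<in> {1..r} \<Longrightarrow> p j \<in> P"
  proof -
    fix j assume j: "j \<in> {1..r}"
    then have "j - 1 < length L" using lenL by auto
    then have "L ! (j - 1) \<in> set L" by (rule nth_mem)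
    then show "p j \<in> P" using setL unfolding p_def by simp
  qed
  have pk: "\<And>j. j \<in> {1..r} \<Longrightarrow> 1 \<le> p j \<and> p j \<le> k"
  proof -
    fix j assume "j \<in> {1..r}"
    then have "p j \<in> P" by (rule pP)
    then have "p j \<in> {1..k}" using Psub by blast
    then show "1 \<le> p j \<and> p j \<le> k" by simp
  qed
  have kkp: "\<And>j. j \<in> {1..r} \<Longrightarrow> kk j + 1 = p j" unfolding kk_def using pk by fastforce
  have pmono: "\<And>j j'. j \<in> {1..r} \<Longrightarrow> j' \<in> {1..r} \<Longrightarrow> j < j' \<Longrightarrow> p j < p j'"
  proof -
    fix j j' assume j: "j \<in> {1..r}" and j': "j' \<in> {1..r}" and lt: "j < j'"
    have "j - 1 < j' - 1" using j lt by auto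
    moreover have "j' - 1 < length L" using j' lenL by auto
    ultimately have "L ! (j - 1) < L ! (j' - 1)" by (rule sorted_wrt_nth_less[OF sortL])
    then show "p j < p j'" unfolding p_def .
  qed
  have pinj: "inj_on p {1..r}"
  proof (rule inj_onI)
    fix x y assume x: "x \<in> {1..r}" and y: "y \<in> {1..r}" and e: "p x = p y"
    show "x = y"
    proof (rule ccontr)
      assume "x \<noteq> y"
      then have "x < y \<or> y < x" by arith
      then show False using pmono[OF x y] pmono[OF y x] e by auto
    qed
  qed
  have pimg: "p ` {1..r} = P"
  proof
    show "p ` {1..r} \<subseteq> P" using pP by auto
    show "P \<subseteq> p ` {1..r}"
    proof
      fix x assume "x \<in> P"
      then obtain i where i: "i < r" "L ! i = x" using setL lenL by (metis in_set_conv_nth)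
      then have "p (Suc i) = x" unfolding p_def by simp
      moreover have "Suc i \<in> {1..r}" using i by simp
      ultimately show "x \<in> p ` {1..r}" by blast
    qed
  qed
  have bsum: "(\<Sum>j=1..r. b j) = s"
  proof -
    have "(\<Sum>i\<in>p ` {1..r}. bb i) = (\<Sum>j=1..r. (bb \<circ> p) j)" by (rule sum.reindex[OF pinj])
    then show ?thesis unfolding ssum b_def pimg by (simp add: comp_def)
  qed
  have bv: "\<And>j. j \<in> {1..r} \<Longrightarrow> b j \<in> {1,2}" unfolding b_def using bbv pP by blast
  have bd: "\<And>j. j \<in> {1..r} \<Longrightarrow> b j \<le> dd (p j)" unfolding b_def using bbd pP by blast
  have boff_r: "blk_off b (Suc r) = s" unfolding blk_off_def bsum[symmetric]
    by (simp add: atLeastLessThanSuc_atLeastAtMost)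
  have doff_k: "blk_off dd (Suc k) = d" unfolding blk_off_def d_def total_dim_def
    by (simp add: atLeastLessThanSuc_atLeastAtMost)
  define G where "G x = (LEAST j. x < blk_off b (Suc j))" for x
  define f where "f x = blk_off dd (p (G x)) + (x - blk_off b (G x))" for x
  have fval: "\<And>j q. j \<in> {1..r} \<Longrightarrow> q < b j \<Longrightarrow> f (blk_off b j + q) = blk_off dd (p j) + q"
  proof -
    fix j q assume j: "j \<in> {1..r}" and q: "q < b j"
    have "(LEAST j'. blk_off b j + q < blk_off b (Suc j')) = j" by (rule grp_eq) (use j q in auto)
    then show "f (blk_off b j + q) = blk_off dd (p j) + q" unfolding f_def G_def by simp
  qed
  have cover: "\<And>x. x < s \<Longrightarrow> \<exists>j q. j \<in> {1..r} \<and> q < b j \<and> x = blk_off b j + q"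
  proof -
    fix x assume "x < s"
    then have "x < blk_off b (Suc r)" using boff_r by simp
    from grp_cover[OF this] obtain j q where "1 \<le> j \<and> j \<le> r \<and> q < b j \<and> x = blk_off b j + q" by blast
    then show "\<exists>j q. j \<in> {1..r} \<and> q < b j \<and> x = blk_off b j + q" by auto
  qed
  have flt: "\<And>j q. j \<in> {1..r} \<Longrightarrow> q < b j \<Longrightarrow> blk_off dd (p j) + q < d"
  proof -
    fix j q assume j: "j \<in> {1..r}" and q: "q < b j"
    have "blk_off dd (p j) + q < blk_off dd (Suc k)"
      by (rule blk_off_lt) (use pk[OF j] bd[OF j] q in auto)
    then show "blk_off dd (p j) + q < d" using doff_k by simp
  qed
  have finj: "inj_on f {..<s}"
  proof (rule inj_onI)
    fix x y assume x: "x \<in> {..<s}" and y: "y \<in> {..<s}" and e: "f x = f y"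
    obtain j q where j: "j \<in> {1..r}" "q < b j" "x = blk_off b j + q" using cover x by blast
    obtain j' q' where j': "j' \<in> {1..r}" "q' < b j'" "y = blk_off b j' + q'" using cover y by blast
    have e2: "blk_off dd (p j) + q = blk_off dd (p j') + q'"
      using e fval[OF j(1,2)] fval[OF j'(1,2)] j(3) j'(3) by simp
    have "\<not> p j < p j'"
    proof
      assume "p j < p j'"
      then have "blk_off dd (p j) + q < blk_off dd (p j')"
        by (intro blk_off_lt) (use pk[OF j(1)] bd[OF j(1)] j(2) in auto)
      then show False using e2 by simp
    qed
    moreover have "\<not> p j' < p j"
    proof
      assume "p j' < p j"
      then have "blk_off dd (p j') + q' < blk_off dd (p j)"
        by (intro blk_off_lt) (use pk[OF j'(1)] bd[OF j'(1)] j'(2) in auto)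
      then show False using e2 by simp
    qed
    ultimately have pe: "p j = p j'" by linarith
    have jj: "j = j'" by (rule inj_onD[OF pinj pe j(1) j'(1)])
    have qq: "q = q'" using e2 pe by simp
    show "x = y" using j(3) j'(3) jj qq by simp
  qed
  have fd: "\<And>x. x < s \<Longrightarrow> f x < d"
  proof -
    fix x assume "x < s"
    then obtain j q where jq: "j \<in> {1..r}" "q < b j" "x = blk_off b j + q" using cover by blast
    then show "f x < d" using fval[OF jq(1,2)] flt[OF jq(1,2)] by simp
  qed
  define W :: "real mat" where "W = mat d s (\<lambda>(x,c). if x = f c then 1 else 0)"
  define V where "V = vec_space.col_space d W"
  have Wc: "W \<in> carrier_mat d s" unfolding W_def by simp
  have rkW: "vec_space.rank d W = s" unfolding W_def by (rule rank_unit_cols[OF finj fd])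
  interpret vs: vec_space "TYPE(real)" d .
  have colsub: "set (cols W) \<subseteq> carrier_vec d" using Wc cols_dim by blast
  have VG: "V \<in> grassmannian s d"
    unfolding grassmannian_def V_def mem_Collect_eq
    using vs.span_is_subspace[OF colsub] rkW unfolding vs.col_space_def vs.rank_def by simp
  have Wentry: "\<And>i x j q. i \<in> {1..k} \<Longrightarrow> x < dd i \<Longrightarrow> j \<in> {1..r} \<Longrightarrow> q < b j \<Longrightarrow>
      W $$ (blk_off dd i + x, blk_off b j + q) = (if blk_off dd i + x = blk_off dd (p j) + q then 1 else 0)"
  proof -
    fix i x j q assume i: "i \<in> {1..k}" and x: "x < dd i" and j: "j \<in> {1..r}" and q: "q < b j"
    have "blk_off dd i + x < blk_off dd (Suc k)" by (rule blk_off_lt) (use i x in auto)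
    then have xd: "blk_off dd i + x < d" using doff_k by simp
    have "blk_off b j + q < blk_off b (Suc r)" by (rule blk_off_lt) (use j q in auto)
    then have qs: "blk_off b j + q < s" using boff_r by simp
    show "W $$ (blk_off dd i + x, blk_off b j + q) = (if blk_off dd i + x = blk_off dd (p j) + q then 1 else 0)"
      unfolding W_def using xd qs fval[OF j q] by simp
  qed
  have zero: "\<forall>j\<in>{1..r}. \<forall>i\<in>{1..kk j}. blk W dd b i j = 0\<^sub>m (dd i) (b j)"
  proof (intro ballI)
    fix j i assume j: "j \<in> {1..r}" and i: "i \<in> {1..kk j}"
    have ik: "i \<in> {1..k}" and ip: "i < p j" using i kkp[OF j] pk[OF j] by auto
    show "blk W dd b i j = 0\<^sub>m (dd i) (b j)"
    proof (rule eq_matI)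
      fix x q assume x: "x < dim_row (0\<^sub>m (dd i) (b j) :: real mat)" and q: "q < dim_col (0\<^sub>m (dd i) (b j) :: real mat)"
      have "blk_off dd i + x < blk_off dd (p j)" by (rule blk_off_lt) (use i ip x in auto)
      then show "blk W dd b i j $$ (x, q) = 0\<^sub>m (dd i) (b j) $$ (x, q)"
        using x q Wentry[OF ik _ j] unfolding blk_def by simp
    qed (auto simp: blk_def)
  qed
  have rank: "\<forall>j\<in>{1..r}. vec_space.rank (dd (kk j + 1)) (blk W dd b (kk j + 1) j) = b j"
  proof
    fix j assume j: "j \<in> {1..r}"
    have "blk W dd b (kk j + 1) j = mat (dd (p j)) (b j) (\<lambda>(x,q). if x = id q then 1 else 0)"
    proof (rule eq_matI)
      fix x q assume x: "x < dim_row (mat (dd (p j)) (b j) (\<lambda>(x,q). if x = id q then 1 else 0) :: real mat)"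
        and q: "q < dim_col (mat (dd (p j)) (b j) (\<lambda>(x,q). if x = id q then 1 else 0) :: real mat)"
      show "blk W dd b (kk j + 1) j $$ (x, q) = mat (dd (p j)) (b j) (\<lambda>(x,q). if x = id q then 1 else 0) $$ (x, q)"
        using x q Wentry[of "p j" x j q] pk[OF j] j unfolding blk_def kkp[OF j] by simp
    qed (use kkp[OF j] in \<open>auto simp: blk_def\<close>)
    moreover have "vec_space.rank (dd (p j)) (mat (dd (p j)) (b j) (\<lambda>(x,q). if x = id q then 1 else 0) :: real mat) = b j"
      by (rule rank_unit_cols) (use bd[OF j] in auto)
    ultimately show "vec_space.rank (dd (kk j + 1)) (blk W dd b (kk j + 1) j) = b j"
      using kkp[OF j] by simp
  qed
  have kmono: "\<forall>j\<in>{1..r}. \<forall>j'\<in>{1..r}. j < j' \<longrightarrow> kk j < kk j'"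
  proof (intro ballI impI)
    fix j j' assume j: "j \<in> {1..r}" and j': "j' \<in> {1..r}" and lt: "j < j'"
    have "p j < p j'" by (rule pmono[OF j j' lt])
    then show "kk j < kk j'" using kkp[OF j] kkp[OF j'] by linarith
  qed
  have klt: "\<forall>j\<in>{1..r}. kk j < k"
  proof
    fix j assume j: "j \<in> {1..r}"
    show "kk j < k" using kkp[OF j] pk[OF j] by linarith
  qed
  have bce: "is_bce_basis k dd s V W r b kk"
    unfolding is_bce_basis_def
    using Wc V_def bv bsum kmono klt zero rank unfolding d_def by blast
  have set: "{kk j + 1 | j. j \<in> {1..r} \<and> b j = 1 \<and> dd (kk j + 1) = 2} = {i\<in>P. bb i = 1 \<and> dd i = 2}"
  proof -
    have "{kk j + 1 | j. j \<in> {1..r} \<and> b j = 1 \<and> dd (kk j + 1) = 2}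
        = {p j | j. j \<in> {1..r} \<and> bb (p j) = 1 \<and> dd (p j) = 2}"
    proof (rule Collect_cong, rule iffI)
      fix x assume "\<exists>j. x = kk j + 1 \<and> j \<in> {1..r} \<and> b j = 1 \<and> dd (kk j + 1) = 2"
      then obtain j where "x = kk j + 1" "j \<in> {1..r}" "b j = 1" "dd (kk j + 1) = 2" by blast
      then show "\<exists>j. x = p j \<and> j \<in> {1..r} \<and> bb (p j) = 1 \<and> dd (p j) = 2"
        using kkp unfolding b_def by metis
    next
      fix x assume "\<exists>j. x = p j \<and> j \<in> {1..r} \<and> bb (p j) = 1 \<and> dd (p j) = 2"
      then obtain j where "x = p j" "j \<in> {1..r}" "bb (p j) = 1" "dd (p j) = 2" by blast
      then show "\<exists>j. x = kk j + 1 \<and> j \<in> {1..r} \<and> b j = 1 \<and> dd (kk j + 1) = 2"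
        using kkp unfolding b_def by metis
    qed
    also have "\<dots> = {i\<in>p ` {1..r}. bb i = 1 \<and> dd i = 2}" by auto
    finally show ?thesis using pimg by simp
  qed
  show ?thesis using VG bce set unfolding d_def by blast
qed



lemma forward:
  assumes dd: "\<forall>i\<in>{1..k}. dd i \<in> {1,2}"
    and J: "J \<in> calJ k dd s" and sd: "s \<le> total_dim k dd"
  shows "\<exists>V W r b kk. V \<in> grassmannian s (total_dim k dd) \<and> is_bce_basis k dd s V W r b kk
       \<and> {kk j + 1 | j. j \<in> {1..r} \<and> b j = 1 \<and> dd (kk j + 1) = 2} = J"
proof -
  define JC' where "JC' = JC k dd"
  define Oc where "Oc = {1..k} - JC'"
  define m where "m = card J"
  define n2 where "n2 = card JC'"
  define n1 where "n1 = card Oc"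
  have JCsub: "JC' \<subseteq> {1..k}" unfolding JC'_def JC_def by auto
  have JJC: "J \<subseteq> JC'" and mle: "m \<le> s" "m \<le> total_dim k dd - s"
    and par: "card JC' = k \<longrightarrow> even (s - m)"
    using J unfolding calJ_def JC'_def m_def by auto
  have finJC: "finite JC'" using JCsub finite_subset by blast
  have finJ: "finite J" using JJC finJC finite_subset by blast
  have finO: "finite Oc" unfolding Oc_def by simp
  have mn2: "m \<le> n2" unfolding m_def n2_def by (rule card_mono[OF finJC JJC])
  have uni: "{1..k} = JC' \<union> Oc" and dis: "JC' \<inter> Oc = {}" using JCsub unfolding Oc_def by auto
  have ddJC: "\<And>i. i \<in> JC' \<Longrightarrow> dd i = 2" unfolding JC'_def JC_def by auto
  have ddO: "\<And>i. i \<in> Oc \<Longrightarrow> dd i = 1" using dd unfolding Oc_def JC'_def JC_def by auto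
  have tot: "total_dim k dd = 2 * n2 + n1"
  proof -
    have "total_dim k dd = (\<Sum>i\<in>JC'. dd i) + (\<Sum>i\<in>Oc. dd i)"
      unfolding total_dim_def uni by (rule sum.union_disjoint[OF finJC finO dis])
    also have "\<dots> = (\<Sum>i\<in>JC'. 2) + (\<Sum>i\<in>Oc. 1)" using ddJC ddO by simp
    finally show ?thesis unfolding n1_def n2_def by simp
  qed
  have cardk: "n2 + n1 = k"
    unfolding n1_def n2_def using card_Un_disjoint[OF finJC finO dis] uni by (metis card_atLeastAtMost diff_Suc_1)
  have mle2: "s + m \<le> 2 * n2 + n1" using mle tot sd by auto
  obtain a c where ac: "a \<le> n2 - m" "c \<le> n1" "s = m + 2 * a + c"
  proof (cases "n1 = 0")
    case True
    then have "even (s - m)" using par cardk unfolding n2_def by simp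
    then obtain t where t: "s - m = 2 * t" by blast
    show ?thesis by (rule that[of t 0]) (use t mle mle2 mn2 True in auto)
  next
    case False
    define a where "a = min ((s - m) div 2) (n2 - m)"
    show ?thesis
      by (rule that[of a "s - m - 2 * a"]) (use False mle mle2 mn2 in \<open>auto simp: a_def min_def\<close>)
  qed
  have "a \<le> card (JC' - J)" using ac(1) card_Diff_subset[OF finJ JJC] unfolding m_def n2_def by simp
  then obtain A where A: "A \<subseteq> JC' - J" "card A = a" "finite A" by (rule obtain_subset_with_card_n)
  have "c \<le> card Oc" using ac(2) unfolding n1_def .
  then obtain C where C: "C \<subseteq> Oc" "card C = c" "finite C" by (rule obtain_subset_with_card_n)
  define P where "P = J \<union> A \<union> C"
  define bb :: "nat \<Rightarrow> nat" where "bb i = (if i \<in> A then 2 else 1)" for i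
  have Psub: "P \<subseteq> {1..k}" unfolding P_def using JJC A C JCsub Oc_def by blast
  have bbv: "\<And>i. i \<in> P \<Longrightarrow> bb i \<in> {1,2}" unfolding bb_def by auto
  have bbd: "\<And>i. i \<in> P \<Longrightarrow> bb i \<le> dd i"
  proof -
    fix i assume i: "i \<in> P"
    then have "dd i \<in> {1,2}" using dd Psub by blast
    moreover have "i \<in> A \<Longrightarrow> dd i = 2" using A ddJC by blast
    ultimately show "bb i \<le> dd i" unfolding bb_def by auto
  qed
  have d1: "J \<inter> A = {}" using A by blast
  have d2: "(J \<union> A) \<inter> C = {}" using A C JJC Oc_def by blast
  have "(\<Sum>i\<in>P. bb i) = (\<Sum>i\<in>J. bb i) + (\<Sum>i\<in>A. bb i) + (\<Sum>i\<in>C. bb i)"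
    unfolding P_def using finJ A(3) C(3) d1 d2 by (simp add: sum.union_disjoint)
  also have "\<dots> = (\<Sum>i\<in>J. 1) + (\<Sum>i\<in>A. 2) + (\<Sum>i\<in>C. 1)"
    using d1 d2 unfolding bb_def by (intro arg_cong2[where f="(+)"] sum.cong) auto
  also have "\<dots> = s" using ac(3) A(2) C(2) unfolding m_def by simp
  finally have ssum: "s = (\<Sum>i\<in>P. bb i)" by simp
  have set: "{i\<in>P. bb i = 1 \<and> dd i = 2} = J"
    using JJC ddJC ddO d1 C unfolding P_def bb_def by force
  show ?thesis using construct[OF Psub bbv bbd ssum] set by simp
qed



theorem lemma4p13:
  fixes k s :: nat and dd :: "nat \<Rightarrow> nat" and J :: "nat set"
  assumes "\<forall>i\<in>{1..k}. dd i \<in> {1,2}"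
    and "1 \<le> s" and "s \<le> total_dim k dd"
    and "J \<subseteq> JC k dd"
  shows "J \<in> calJ k dd s \<longleftrightarrow>
    (\<exists>V W r b kk. V \<in> grassmannian s (total_dim k dd) \<and> is_bce_basis k dd s V W r b kk
       \<and> {kk j + 1 | j. j \<in> {1..r} \<and> b j = 1 \<and> dd (kk j + 1) = 2} = J)"
proof
  assume "J \<in> calJ k dd s"
  then show "\<exists>V W r b kk. V \<in> grassmannian s (total_dim k dd) \<and> is_bce_basis k dd s V W r b kk
       \<and> {kk j + 1 | j. j \<in> {1..r} \<and> b j = 1 \<and> dd (kk j + 1) = 2} = J"
    using forward assms(1,3) by blast
next
  assume "\<exists>V W r b kk. V \<in> grassmannian s (total_dim k dd) \<and> is_bce_basis k dd s V W r b kk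
       \<and> {kk j + 1 | j. j \<in> {1..r} \<and> b j = 1 \<and> dd (kk j + 1) = 2} = J"
  then obtain V W r b kk where "is_bce_basis k dd s V W r b kk"
      and "{kk j + 1 | j. j \<in> {1..r} \<and> b j = 1 \<and> dd (kk j + 1) = 2} = J" by blast
  then show "J \<in> calJ k dd s" using backward[OF assms(1)] by blast
qed

end
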